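(* Every strongly regular graph with girth five has no quantum symmetry. In particular, the Hoffman–Singleton graph has no quantum symmetry.
   Context: A $k$-regular graph on $n$ vertices is strongly regular with parameters $(n,k,\lambda,\mu)$ if adjacent vertices have exactly $\lambda$ common neighbors and non-adjacent distinct vertices have exactly $\mu$ common neighbors. The girth is the length of a shortest cycle. The Hoffman–Singleton graph is the strongly regular graph with parameters $(50,7,0,1)$. For a finite simple undirected graph $\Gamma=(V,E)$ with $V=\{1,\dots,n\}$, $C(G_{aut}^+(\Gamma))$ is the universal unital $C^*$-algebra generated by $u_{ij}$, $1\le i,j\le n$, with relations: (R1) $u_{ij}=u_{ij}^*=u_{ij}^2$; (R2) $\sum_{l} u_{il}=1=\sum_{l} u_{li}$ for all $i$; (R3) $u_{ij}u_{kl}=u_{kl}u_{ij}=0$ whenever exactly one of $(i,k)\in E$, $(j,l)\in E$ holds. $\Gamma$ has no quantum symmetry if $C(G_{aut}^+(\Gamma))$ is commutative. *)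

theory Defs
  imports Complex_Main "HOL-Library.Extended_Nat"
begin

definition simple_graph :: "nat \<Rightarrow> (nat \<Rightarrow> nat \<Rightarrow> bool) \<Rightarrow> bool" where
  "simple_graph n E \<longleftrightarrow>
     (\<forall>x y. E x y \<longrightarrow> x \<in> {1..n} \<and> y \<in> {1..n}) \<and>
     (\<forall>x y. E x y \<longrightarrow> E y x) \<and> (\<forall>x. \<not> E x x)"

definition neighbours :: "nat \<Rightarrow> (nat \<Rightarrow> nat \<Rightarrow> bool) \<Rightarrow> nat \<Rightarrow> nat set" where
  "neighbours n E x = {y \<in> {1..n}. E x y}"

definition strongly_regular ::
  "nat \<Rightarrow> (nat \<Rightarrow> nat \<Rightarrow> bool) \<Rightarrow> nat \<Rightarrow> nat \<Rightarrow> nat \<Rightarrow> bool" where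
  "strongly_regular n E k lam mu \<longleftrightarrow>
     simple_graph n E \<and>
     (\<forall>x\<in>{1..n}. card (neighbours n E x) = k) \<and>
     (\<forall>x\<in>{1..n}. \<forall>y\<in>{1..n}. E x y \<longrightarrow>
        card (neighbours n E x \<inter> neighbours n E y) = lam) \<and>
     (\<forall>x\<in>{1..n}. \<forall>y\<in>{1..n}. x \<noteq> y \<longrightarrow> \<not> E x y \<longrightarrow>
        card (neighbours n E x \<inter> neighbours n E y) = mu)"

definition has_cycle :: "nat \<Rightarrow> (nat \<Rightarrow> nat \<Rightarrow> bool) \<Rightarrow> nat \<Rightarrow> bool" where
  "has_cycle n E m \<longleftrightarrow> 3 \<le> m \<and>
     (\<exists>v :: nat \<Rightarrow> nat. inj_on v {..<m} \<and> v ` {..<m} \<subseteq> {1..n} \<and>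
        (\<forall>i<m. E (v i) (v (Suc i mod m))))"

text \<open>Girth: length of a shortest cycle (infinity if the graph is acyclic).\<close>
definition girth :: "nat \<Rightarrow> (nat \<Rightarrow> nat \<Rightarrow> bool) \<Rightarrow> enat" where
  "girth n E = (INF m\<in>{m. has_cycle n E m}. enat m)"

locale cstar_algebra =
  fixes smul :: "complex \<Rightarrow> 'a::ring_1 \<Rightarrow> 'a"
    and star :: "'a \<Rightarrow> 'a"
    and nrm :: "'a \<Rightarrow> real"
  assumes smul_add_right: "smul c (x + y) = smul c x + smul c y"
    and smul_add_left: "smul (c + d) x = smul c x + smul d x"
    and smul_mult: "smul (c * d) x = smul c (smul d x)"
    and smul_one: "smul 1 x = x"
    and smul_times_left: "smul c (x * y) = smul c x * y"
    and smul_times_right: "smul c (x * y) = x * smul c y"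
    and star_star: "star (star x) = x"
    and star_add: "star (x + y) = star x + star y"
    and star_mult: "star (x * y) = star y * star x"
    and star_smul: "star (smul c x) = smul (cnj c) (star x)"
    and nrm_zero_iff: "nrm x = 0 \<longleftrightarrow> x = 0"
    and nrm_triangle: "nrm (x + y) \<le> nrm x + nrm y"
    and nrm_smul: "nrm (smul c x) = cmod c * nrm x"
    and nrm_mult: "nrm (x * y) \<le> nrm x * nrm y"
    and nrm_complete: "(\<forall>e>0. \<exists>N. \<forall>m\<ge>N. \<forall>k\<ge>N. nrm (X m - X k) < e) \<Longrightarrow>
                        \<exists>L. (\<lambda>m. nrm (X m - L)) \<longlonglongrightarrow> 0"
    and cstar_identity: "nrm (star x * x) = (nrm x)\<^sup>2"

text \<open>u is a family in a unital *-algebra satisfying relations (R1)-(R3) of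
  C(G_aut^+(Gamma)) for the graph ({1..n}, E).\<close>
definition graph_magic_unitary ::
  "('a::ring_1 \<Rightarrow> 'a) \<Rightarrow> nat \<Rightarrow> (nat \<Rightarrow> nat \<Rightarrow> bool) \<Rightarrow> (nat \<Rightarrow> nat \<Rightarrow> 'a) \<Rightarrow> bool" where
  "graph_magic_unitary star n E u \<longleftrightarrow>
     (\<forall>i\<in>{1..n}. \<forall>j\<in>{1..n}. star (u i j) = u i j \<and> u i j * u i j = u i j) \<and>
     (\<forall>i\<in>{1..n}. (\<Sum>l\<in>{1..n}. u i l) = 1 \<and> (\<Sum>l\<in>{1..n}. u l i) = 1) \<and>
     (\<forall>i\<in>{1..n}. \<forall>j\<in>{1..n}. \<forall>k\<in>{1..n}. \<forall>l\<in>{1..n}.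
        E i k \<noteq> E j l \<longrightarrow> u i j * u k l = 0 \<and> u k l * u i j = 0)"

end

theory Submission
  imports Defs
begin

context cstar_algebra begin

lemma star_zero: "star 0 = 0"
proof -
  have "star (0 + 0) = star 0 + star 0" by (rule star_add)
  then show ?thesis by simp
qed

lemma star_diff: "star (x - y) = star x - star y"
proof -
  have "star ((x - y) + y) = star (x - y) + star y" by (rule star_add)
  then show ?thesis by (simp add: algebra_simps)
qed

lemma star_sum: "finite A \<Longrightarrow> star (sum f A) = (\<Sum>x\<in>A. star (f x))"
  by (induct A rule: finite_induct) (simp_all add: star_zero star_add)

lemma T1: "star x * x = 0 \<Longrightarrow> x = 0"
proof -
  assume "star x * x = 0"
  then have "nrm (star x * x) = 0" using nrm_zero_iff by simp
  then have "(nrm x)\<^sup>2 = 0" using cstar_identity by simp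
  then have "nrm x = 0" by simp
  then show "x = 0" using nrm_zero_iff by simp
qed

lemma proj_comm:
  assumes sp: "star p = p" and pp: "p * p = p" and sq: "star q = q" and qq: "q * q = q"
    and h: "p*q*p*q = p*q*p*q*p"
  shows "p * q = q * p"
proof -
  have pp': "p * (p * x) = p * x" for x using pp by (metis mult.assoc)
  have qq': "q * (q * x) = q * x" for x using qq by (metis mult.assoc)
  define y where "y = p*q - p*q*p"
  define z where "z = p*q*p"
  have sz: "star z = z" unfolding z_def using sp sq by (simp add: star_mult mult.assoc)
  have sy: "star y = q*p - p*q*p" unfolding y_def using sp sq by (simp add: star_diff star_mult mult.assoc)
  have zy: "z*y = p*q*p*q - p*q*p*q*p" unfolding z_def y_def by (simp add: algebra_simps pp')
  then have zy0: "z*y = 0" using h by simp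
  have yy: "y * star y = z - z*z" unfolding sy unfolding y_def z_def
    by (simp add: algebra_simps pp' qq')
  have "z * (z - z*z) = (z*y) * star y" using yy by (simp add: mult.assoc)
  then have "z * (z - z*z) = 0" using zy0 by simp
  then have z3: "z*z*z = z*z" by (simp add: algebra_simps)
  define w where "w = z - z*z"
  have sw: "star w = w" unfolding w_def by (simp add: star_diff star_mult sz)
  have z4: "z*z*z*z = z*z" using z3 by (metis mult.assoc)
  have "w * w = z*z - z*z*z - z*z*z + z*z*z*z" unfolding w_def by (simp add: algebra_simps)
  then have ww: "w * w = 0" using z3 z4 by simp
  have "w = 0" by (rule T1) (simp add: sw ww)
  then have "y * star y = 0" using yy w_def by simp
  then have yy0: "star (star y) * star y = 0" by (simp add: star_star)
  have "star y = 0" by (rule T1) (rule yy0)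
  then have "y = 0" by (metis star_star star_zero)
  then have e: "p*q = p*q*p" unfolding y_def by simp
  have "q*p = star (p*q)" using sp sq by (simp add: star_mult)
  also have "... = star (p*q*p)" using e by simp
  also have "... = p*q*p" using sz z_def by simp
  finally show ?thesis using e by simp
qed

end

locale qgraph = cstar_algebra +
  fixes n :: nat and E :: "nat \<Rightarrow> nat \<Rightarrow> bool" and u :: "nat \<Rightarrow> nat \<Rightarrow> 'a::ring_1"
  assumes gmu: "graph_magic_unitary star n E u"
    and Eb: "E x y \<Longrightarrow> x \<in> {1..n} \<and> y \<in> {1..n}"
    and Es: "E x y \<Longrightarrow> E y x"
    and Ei: "\<not> E x x"
    and notri: "E x y \<Longrightarrow> E y z \<Longrightarrow> \<not> E x z"
    and uniq: "x \<noteq> z \<Longrightarrow> E x m \<Longrightarrow> E m z \<Longrightarrow> E x m' \<Longrightarrow> E m' z \<Longrightarrow> m = m'"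
    and exc: "x \<in> {1..n} \<Longrightarrow> z \<in> {1..n} \<Longrightarrow> x \<noteq> z \<Longrightarrow> \<not> E x z \<Longrightarrow> \<exists>m. E x m \<and> E m z"
    and deg: "x \<in> {1..n} \<Longrightarrow> \<exists>m1 m2. m1 \<noteq> m2 \<and> E x m1 \<and> E x m2"
begin

lemma sa: "i \<in> {1..n} \<Longrightarrow> j \<in> {1..n} \<Longrightarrow> star (u i j) = u i j"
  using gmu unfolding graph_magic_unitary_def by blast

lemma idem: "i \<in> {1..n} \<Longrightarrow> j \<in> {1..n} \<Longrightarrow> u i j * u i j = u i j"
  using gmu unfolding graph_magic_unitary_def by blast

lemma idem': "i \<in> {1..n} \<Longrightarrow> j \<in> {1..n} \<Longrightarrow> u i j * (u i j * x) = u i j * x"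
  using idem by (metis mult.assoc)

lemma rowsum: "i \<in> {1..n} \<Longrightarrow> (\<Sum>l\<in>{1..n}. u i l) = 1"
  using gmu unfolding graph_magic_unitary_def by blast

lemma colsum: "i \<in> {1..n} \<Longrightarrow> (\<Sum>l\<in>{1..n}. u l i) = 1"
  using gmu unfolding graph_magic_unitary_def by blast

lemma R3: "i \<in> {1..n} \<Longrightarrow> j \<in> {1..n} \<Longrightarrow> k \<in> {1..n} \<Longrightarrow> l \<in> {1..n} \<Longrightarrow>
   E i k \<noteq> E j l \<Longrightarrow> u i j * u k l = 0"
  using gmu unfolding graph_magic_unitary_def by blast

lemma ins_row: "i \<in> {1..n} \<Longrightarrow> x * y = (\<Sum>t\<in>{1..n}. x * u i t * y)"
proof -
  assume i: "i \<in> {1..n}"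
  have "x * y = x * (\<Sum>t\<in>{1..n}. u i t) * y" using rowsum[OF i] by simp
  also have "\<dots> = (\<Sum>t\<in>{1..n}. x * u i t * y)" by (simp add: sum_distrib_left sum_distrib_right)
  finally show ?thesis .
qed

lemma ins_col: "j \<in> {1..n} \<Longrightarrow> x * y = (\<Sum>t\<in>{1..n}. x * u t j * y)"
proof -
  assume j: "j \<in> {1..n}"
  have "x * y = x * (\<Sum>t\<in>{1..n}. u t j) * y" using colsum[OF j] by simp
  also have "\<dots> = (\<Sum>t\<in>{1..n}. x * u t j * y)" by (simp add: sum_distrib_left sum_distrib_right)
  finally show ?thesis .
qed

lemma nonadj_nb:
  assumes "j \<in> {1..n}" "j \<noteq> l" "\<not> E j l"
  obtains m where "E j m" "\<not> E m l"
proof -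
  obtain m1 m2 where m: "m1 \<noteq> m2" "E j m1" "E j m2" using deg[OF assms(1)] by blast
  have "\<not> E m1 l \<or> \<not> E m2 l" using uniq[OF assms(2) m(2) _ m(3)] m(1) by blast
  then show ?thesis using m that by blast
qed

lemma orth_row:
  assumes i: "i \<in> {1..n}" and j: "j \<in> {1..n}" and l: "l \<in> {1..n}" and jl: "j \<noteq> l"
  shows "u i j * u i l = 0"
proof (cases "E j l")
  case True
  then show ?thesis using R3[OF i j i l] Ei by simp
next
  case False
  obtain m where m: "E j m" "\<not> E m l" using nonadj_nb[OF j jl False] by blast
  have mV: "m \<in> {1..n}" using Eb m(1) by blast
  have "u i j * u i l = (\<Sum>t\<in>{1..n}. u i j * u t m * u i l)" by (rule ins_col[OF mV])
  also have "\<dots> = (\<Sum>t\<in>{1..n}. 0)"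
  proof (rule sum.cong)
    fix t assume t: "t \<in> {1..n}"
    show "u i j * u t m * u i l = 0"
    proof (cases "E i t")
      case True
      then have "u t m * u i l = 0" using R3[OF t mV i l] Es m(2) by blast
      then show ?thesis by (simp add: mult.assoc)
    next
      case False
      then have "u i j * u t m = 0" using R3[OF i j t mV] m(1) by blast
      then show ?thesis by simp
    qed
  qed simp
  finally show ?thesis by simp
qed

lemma orth_col:
  assumes i: "i \<in> {1..n}" and j: "j \<in> {1..n}" and l: "l \<in> {1..n}" and jl: "j \<noteq> l"
  shows "u j i * u l i = 0"
proof (cases "E j l")
  case True
  then show ?thesis using R3[OF j i l i] Ei by simp
next
  case False
  obtain m where m: "E j m" "\<not> E m l" using nonadj_nb[OF j jl False] by blast
  have mV: "m \<in> {1..n}" using Eb m(1) by blast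
  have "u j i * u l i = (\<Sum>t\<in>{1..n}. u j i * u m t * u l i)" by (rule ins_row[OF mV])
  also have "\<dots> = (\<Sum>t\<in>{1..n}. 0)"
  proof (rule sum.cong)
    fix t assume t: "t \<in> {1..n}"
    show "u j i * u m t * u l i = 0"
    proof (cases "E i t")
      case True
      then have "u m t * u l i = 0" using R3[OF mV t l i] Es m(2) by blast
      then show ?thesis by (simp add: mult.assoc)
    next
      case False
      then have "u j i * u m t = 0" using R3[OF j i mV t] m(1) by blast
      then show ?thesis by simp
    qed
  qed simp
  finally show ?thesis by simp
qed

lemma fac:
  assumes a: "a \<in> {1..n}" and b: "b \<in> {1..n}" and c: "c \<in> {1..n}" and d: "d \<in> {1..n}"
    and ac: "a \<noteq> c" and bd: "b \<noteq> d" and e1: "E a m" "E m c" and e2: "E b m'" "E m' d"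
  shows "u a b * u c d = u a b * u m m' * u c d"
proof -
  have mV: "m \<in> {1..n}" and m'V: "m' \<in> {1..n}" using Eb e1 e2 by blast+
  have "u a b * u c d = (\<Sum>t\<in>{1..n}. u a b * u m t * u c d)" by (rule ins_row[OF mV])
  also have "\<dots> = u a b * u m m' * u c d + (\<Sum>t\<in>{1..n} - {m'}. u a b * u m t * u c d)"
    using m'V by (simp add: sum.remove)
  also have "(\<Sum>t\<in>{1..n} - {m'}. u a b * u m t * u c d) = (\<Sum>t\<in>{1..n} - {m'}. 0)"
  proof (rule sum.cong)
    fix t assume t: "t \<in> {1..n} - {m'}"
    then have tV: "t \<in> {1..n}" and tm: "t \<noteq> m'" by auto
    show "u a b * u m t * u c d = 0"
    proof (cases "E b t")
      case False
      then have "u a b * u m t = 0" using R3[OF a b mV tV] e1 by blast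
      then show ?thesis by simp
    next
      case True
      then have "\<not> E t d" using uniq[OF bd _ _ e2] tm by blast
      then have "u m t * u c d = 0" using R3[OF mV tV c d] e1 by blast
      then show ?thesis by (simp add: mult.assoc)
    qed
  qed simp
  finally show ?thesis by simp
qed


lemma adj:
  assumes i: "i \<in> {1..n}" and j: "j \<in> {1..n}" and k: "k \<in> {1..n}" and l: "l \<in> {1..n}"
    and ik: "E i k" and jl: "E j l"
  shows "u i j * u k l = u k l * u i j"
proof -
  define p where "p = u i j"
  define q where "q = u k l"
  have S1: "p*q*p*q*u i s = 0" if s: "s \<in> {1..n}" and sj: "s \<noteq> j" for s
  proof (cases "E l s")
    case True
    define f where "f r = p*q*u r j*u i s" for r
    define g where "g r = p*q*u r j*q*u i s" for r
    have sf: "p*q*u i s = (\<Sum>r\<in>{1..n}. f r)" unfolding f_def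
      using ins_col[OF j, of "p*q" "u i s"] by simp
    have "p*q*u i s = p*q*(q*u i s)" unfolding q_def using idem'[OF k l] by (simp add: mult.assoc)
    also have "\<dots> = (\<Sum>r\<in>{1..n}. g r)" unfolding g_def
      using ins_col[OF j, of "p*q" "q*u i s"] by (simp add: mult.assoc)
    finally have sg: "p*q*u i s = (\<Sum>r\<in>{1..n}. g r)" .
    have fg: "f r = g r" if r: "r \<in> {1..n} - {i}" for r
    proof (cases "E k r")
      case True
      have "u r j * u i s = u r j * u k l * u i s"
        apply (rule fac) using r j i s sj True ik jl \<open>E l s\<close> by (auto intro: Es)
      then show ?thesis unfolding f_def g_def q_def by (simp add: mult.assoc)
    next
      case False
      have rV: "r \<in> {1..n}" using r by blast
      have "q * u r j = 0" unfolding q_def using R3[OF k l rV j] False Es[OF jl] by blast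
      then show ?thesis unfolding f_def g_def by (simp add: mult.assoc)
    qed
    have fi: "f i = 0" unfolding f_def using orth_row[OF i j s] sj by (simp add: mult.assoc)
    have "(\<Sum>r\<in>{1..n}. f r) = f i + (\<Sum>r\<in>{1..n} - {i}. f r)" using i by (simp add: sum.remove)
    moreover have "(\<Sum>r\<in>{1..n}. g r) = g i + (\<Sum>r\<in>{1..n} - {i}. g r)" using i by (simp add: sum.remove)
    moreover have "(\<Sum>r\<in>{1..n} - {i}. f r) = (\<Sum>r\<in>{1..n} - {i}. g r)" using fg by (rule sum.cong[OF refl])
    ultimately have "g i = 0" using sf sg fi by simp
    then show ?thesis unfolding g_def p_def by simp
  next
    case False
    have "q * u i s = 0" unfolding q_def using R3[OF k l i s] False Es[OF ik] by blast
    then show ?thesis by (simp add: mult.assoc)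
  qed
  have "p*q*p*q = (\<Sum>s\<in>{1..n}. p*q*p*q*u i s * 1)" using ins_row[OF i, of "p*q*p*q" 1] by simp
  also have "\<dots> = p*q*p*q*u i j + (\<Sum>s\<in>{1..n} - {j}. p*q*p*q*u i s)" using j by (simp add: sum.remove)
  also have "(\<Sum>s\<in>{1..n} - {j}. p*q*p*q*u i s) = (\<Sum>s\<in>{1..n} - {j}. 0)"
    using S1 by (intro sum.cong) auto
  finally have "p*q*p*q = p*q*p*q*p" unfolding p_def by simp
  then show ?thesis unfolding p_def q_def
    by (rule proj_comm[OF sa[OF i j] idem[OF i j] sa[OF k l] idem[OF k l]])
qed

lemma adj_or:
  assumes i: "i \<in> {1..n}" and j: "j \<in> {1..n}" and k: "k \<in> {1..n}" and l: "l \<in> {1..n}"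
    and ik: "E i k"
  shows "u i j * u k l = u k l * u i j"
proof (cases "E j l")
  case True
  then show ?thesis using adj[OF assms True] by simp
next
  case False
  then show ?thesis using R3[OF i j k l] R3[OF k l i j] ik Es by metis
qed

lemma C1:
  assumes ik: "E i k" and bl: "E b l" and gi: "E g i" and gk: "g \<noteq> k"
  shows "(\<Sum>t\<in>{t\<in>{1..n}. E b t \<and> t \<noteq> l}. u g t) * u k l = u i b * u k l"
proof -
  have i: "i \<in> {1..n}" and k: "k \<in> {1..n}" and b: "b \<in> {1..n}" and l: "l \<in> {1..n}"
    and g: "g \<in> {1..n}" using Eb ik bl gi by blast+
  define N where "N = {t\<in>{1..n}. E b t \<and> t \<noteq> l}"
  have fN: "finite N" unfolding N_def by simp
  have lN: "l \<notin> N" unfolding N_def by simp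
  have "(\<Sum>t\<in>N. u g t) * u k l = (\<Sum>t\<in>N. u g t * u k l)" by (simp add: sum_distrib_right)
  also have "\<dots> = (\<Sum>t\<in>N. u g t * u i b * u k l)"
  proof (rule sum.cong[OF refl])
    fix t assume t: "t \<in> N"
    then have tV: "t \<in> {1..n}" and bt: "E b t" and tl: "t \<noteq> l" unfolding N_def by auto
    show "u g t * u k l = u g t * u i b * u k l"
      by (rule fac[OF g tV k l gk tl gi ik Es[OF bt] bl])
  qed
  also have "\<dots> = (\<Sum>t\<in>N. u g t * u i b) * u k l" by (simp add: sum_distrib_right)
  also have "(\<Sum>t\<in>N. u g t * u i b) = u i b - u g l * u i b"
  proof -
    have "u i b = (\<Sum>t\<in>{1..n}. u g t * u i b)" using ins_row[OF g, of 1 "u i b"] by simp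
    also have "\<dots> = (\<Sum>t\<in>insert l N. u g t * u i b)"
    proof (rule sum.mono_neutral_right)
      show "insert l N \<subseteq> {1..n}" using l unfolding N_def by auto
      show "\<forall>t\<in>{1..n} - insert l N. u g t * u i b = 0"
      proof
        fix t assume t: "t \<in> {1..n} - insert l N"
        then have tV: "t \<in> {1..n}" and nbt: "\<not> E t b" unfolding N_def using Es by auto
        show "u g t * u i b = 0" using R3[OF g tV i b] gi nbt by simp
      qed
    qed simp
    also have "\<dots> = u g l * u i b + (\<Sum>t\<in>N. u g t * u i b)" using fN lN by simp
    finally show ?thesis by (simp add: algebra_simps)
  qed
  also have "(u i b - u g l * u i b) * u k l = u i b * u k l"
  proof -
    have "u g l * u i b * u k l = u g l * (u k l * u i b)"
      using adj_or[OF i b k l ik] by (simp add: mult.assoc)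
    also have "\<dots> = 0" using orth_col[OF l g k gk] by (simp add: mult.assoc[symmetric])
    finally show ?thesis by (simp add: algebra_simps)
  qed
  finally show ?thesis unfolding N_def .
qed

lemma C1':
  assumes ik: "E i k" and bl: "E b l" and gi: "E g i" and gk: "g \<noteq> k"
  shows "u k l * (\<Sum>t\<in>{t\<in>{1..n}. E b t \<and> t \<noteq> l}. u g t) = u i b * u k l"
proof -
  have i: "i \<in> {1..n}" and k: "k \<in> {1..n}" and b: "b \<in> {1..n}" and l: "l \<in> {1..n}"
    and g: "g \<in> {1..n}" using Eb ik bl gi by blast+
  define G where "G = (\<Sum>t\<in>{t\<in>{1..n}. E b t \<and> t \<noteq> l}. u g t)"
  have sG: "star G = G"
  proof -
    have "star G = (\<Sum>t\<in>{t\<in>{1..n}. E b t \<and> t \<noteq> l}. star (u g t))"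
      unfolding G_def by (rule star_sum) simp
    also have "\<dots> = G" unfolding G_def
      by (rule sum.cong[OF refl]) (rule sa[OF g], simp)
    finally show ?thesis .
  qed
  have "u k l * G = star (G * u k l)" by (simp add: star_mult sG sa[OF k l])
  also have "\<dots> = star (u i b * u k l)" using C1[OF assms] G_def by simp
  also have "\<dots> = u k l * u i b" by (simp add: star_mult sa[OF k l] sa[OF i b])
  also have "\<dots> = u i b * u k l" using adj_or[OF i b k l ik] by simp
  finally show ?thesis unfolding G_def .
qed

lemma C2:
  assumes gh: "E g h" and A: "A \<subseteq> {1..n}" and B: "B \<subseteq> {1..n}"
  shows "(\<Sum>t\<in>A. u g t) * (\<Sum>w\<in>B. u h w) = (\<Sum>w\<in>B. u h w) * (\<Sum>t\<in>A. u g t)"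
proof -
  have g: "g \<in> {1..n}" and h: "h \<in> {1..n}" using Eb gh by blast+
  have "(\<Sum>t\<in>A. u g t) * (\<Sum>w\<in>B. u h w) = (\<Sum>t\<in>A. \<Sum>w\<in>B. u g t * u h w)" by (rule sum_product)
  also have "\<dots> = (\<Sum>t\<in>A. \<Sum>w\<in>B. u h w * u g t)"
    using A B adj_or[OF g _ h _ gh] by (intro sum.cong refl) blast
  also have "\<dots> = (\<Sum>w\<in>B. \<Sum>t\<in>A. u h w * u g t)" by (rule sum.swap)
  also have "\<dots> = (\<Sum>w\<in>B. u h w) * (\<Sum>t\<in>A. u g t)" by (rule sum_product[symmetric])
  finally show ?thesis .
qed


lemma nonadj:
  assumes i: "i \<in> {1..n}" and j: "j \<in> {1..n}" and x: "x \<in> {1..n}" and y: "y \<in> {1..n}"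
    and ix: "i \<noteq> x" "\<not> E i x" and jy: "j \<noteq> y" "\<not> E j y"
  shows "u i j * u x y = u x y * u i j"
proof -
  obtain k where k: "E i k" "E k x" using exc[OF i x ix] by blast
  obtain l where l: "E j l" "E l y" using exc[OF j y jy] by blast
  have kV: "k \<in> {1..n}" and lV: "l \<in> {1..n}" using Eb k l by blast+
  define a where "a = u i j"
  define b where "b = u x y"
  define c where "c = u k l"
  have ac: "a * c = c * a" unfolding a_def c_def by (rule adj[OF i j kV lV k(1) l(1)])
  have bc: "b * c = c * b" unfolding b_def c_def by (rule adj[OF x y kV lV Es[OF k(2)] Es[OF l(2)]])
  have cc: "c * c = c" unfolding c_def by (rule idem[OF kV lV])
  have ab: "a * b = a * c * b" unfolding a_def b_def c_def
    by (rule fac[OF i j x y ix(1) jy(1) k l])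
  have ba: "b * a = b * c * a" unfolding a_def b_def c_def
    by (rule fac[OF x y i j ix(1)[symmetric] jy(1)[symmetric] Es[OF k(2)] Es[OF k(1)] Es[OF l(2)] Es[OF l(1)]])
  obtain g1 g2 where g12: "g1 \<noteq> g2" "E i g1" "E i g2" using deg[OF i] by blast
  obtain g where g: "E i g" "g \<noteq> k" using g12 by metis
  have gx: "\<not> E g x"
  proof
    assume "E g x"
    then have "g = k" using uniq[OF ix(1) g(1) _ k(1) k(2)] by blast
    then show False using g(2) by simp
  qed
  have gV: "g \<in> {1..n}" using Eb g(1) by blast
  have gxne: "g \<noteq> x" using g(1) ix(2) by blast
  obtain h where h: "E g h" "E h x" using exc[OF gV x gxne gx] by blast
  have hk: "h \<noteq> k"
  proof
    assume "h = k"
    then have "E g k" using h by simp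
    then show False using notri[OF Es[OF g(1)] k(1)] by simp
  qed
  define Gj where "Gj = (\<Sum>t\<in>{t\<in>{1..n}. E j t \<and> t \<noteq> l}. u g t)"
  define Gy where "Gy = (\<Sum>t\<in>{t\<in>{1..n}. E y t \<and> t \<noteq> l}. u h t)"
  have Gjc: "Gj * c = a * c" unfolding Gj_def a_def c_def by (rule C1[OF k(1) l(1) Es[OF g(1)] g(2)])
  have cGj: "c * Gj = a * c" unfolding Gj_def a_def c_def by (rule C1'[OF k(1) l(1) Es[OF g(1)] g(2)])
  have Gyc: "Gy * c = b * c" unfolding Gy_def b_def c_def by (rule C1[OF Es[OF k(2)] Es[OF l(2)] h(2) hk])
  have cGy: "c * Gy = b * c" unfolding Gy_def b_def c_def by (rule C1'[OF Es[OF k(2)] Es[OF l(2)] h(2) hk])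
  have GG: "Gj * Gy = Gy * Gj" unfolding Gj_def Gy_def by (rule C2[OF h(1)]) auto
  have "a * b = (a * c) * (b * c)" using ab bc cc by (metis mult.assoc)
  also have "\<dots> = Gj * Gy * c" using Gjc Gyc cGy cc by (metis mult.assoc)
  also have "\<dots> = Gy * Gj * c" using GG by simp
  also have "\<dots> = (b * c) * (a * c)" using Gjc Gyc cGj cc by (metis mult.assoc)
  also have "\<dots> = b * a" using ba ac cc by (metis mult.assoc)
  finally show ?thesis unfolding a_def b_def .
qed

lemma main:
  assumes i: "i \<in> {1..n}" and j: "j \<in> {1..n}" and k: "k \<in> {1..n}" and l: "l \<in> {1..n}"
  shows "u i j * u k l = u k l * u i j"
proof (cases "E i k")
  case True
  then show ?thesis by (rule adj_or[OF i j k l])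
next
  case nik: False
  show ?thesis
  proof (cases "E j l")
    case True
    then show ?thesis using R3[OF i j k l] R3[OF k l i j] nik Es by metis
  next
    case njl: False
    show ?thesis
    proof (cases "i = k")
      case True
      then show ?thesis using orth_row[OF i j l] orth_row[OF i l j] by (cases "j = l") auto
    next
      case ik: False
      show ?thesis
      proof (cases "j = l")
        case True
        then show ?thesis using orth_col[OF j i k] orth_col[OF j k i] ik by auto
      next
        case False
        then show ?thesis using nonadj[OF i j k l ik nik False njl] by simp
      qed
    qed
  qed
qed

end

lemma lt3: "(i::nat) < 3 \<Longrightarrow> i = 0 \<or> i = 1 \<or> i = 2" by auto
lemma lt4: "(i::nat) < 4 \<Longrightarrow> i = 0 \<or> i = 1 \<or> i = 2 \<or> i = 3" by auto

theorem theorem4p9: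
  fixes n :: nat and E :: "nat \<Rightarrow> nat \<Rightarrow> bool"
    and smul :: "complex \<Rightarrow> 'a::ring_1 \<Rightarrow> 'a" and star :: "'a \<Rightarrow> 'a" and nrm :: "'a \<Rightarrow> real"
    and u :: "nat \<Rightarrow> nat \<Rightarrow> 'a"
  assumes "\<exists>k lam mu. strongly_regular n E k lam mu"
    and "girth n E = 5"
    and "cstar_algebra smul star nrm"
    and "graph_magic_unitary star n E u"
  shows "\<forall>i\<in>{1..n}. \<forall>j\<in>{1..n}. \<forall>k\<in>{1..n}. \<forall>l\<in>{1..n}. u i j * u k l = u k l * u i j"
proof -
  obtain kk lam mu where srg: "strongly_regular n E kk lam mu" using assms(1) by blast
  have sg: "simple_graph n E" using srg unfolding strongly_regular_def by blast
  have Eb: "\<And>x y. E x y \<Longrightarrow> x \<in> {1..n} \<and> y \<in> {1..n}" using sg unfolding simple_graph_def by blast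
  have Es: "\<And>x y. E x y \<Longrightarrow> E y x" using sg unfolding simple_graph_def by blast
  have Ei: "\<And>x. \<not> E x x" using sg unfolding simple_graph_def by blast
  have degk: "\<And>x. x \<in> {1..n} \<Longrightarrow> card (neighbours n E x) = kk"
    using srg unfolding strongly_regular_def by blast
  have mucard: "\<And>x y. x \<in> {1..n} \<Longrightarrow> y \<in> {1..n} \<Longrightarrow> x \<noteq> y \<Longrightarrow> \<not> E x y \<Longrightarrow>
      card (neighbours n E x \<inter> neighbours n E y) = mu"
    using srg unfolding strongly_regular_def by blast
  define C where "C = {m. has_cycle n E m}"
  have gC: "(INF m\<in>C. enat m) = 5" using assms(2) unfolding girth_def C_def by simp
  have low: "m \<in> C \<Longrightarrow> 5 \<le> m" for m
  proof -
    assume "m \<in> C"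
    then have "(INF m\<in>C. enat m) \<le> enat m" by (rule INF_lower)
    then show ?thesis using gC by (simp add: numeral_eq_enat)
  qed
  have Cne: "C \<noteq> {}"
  proof
    assume "C = {}"
    then have "(INF m\<in>C. enat m) = \<infinity>" by (simp add: top_enat_def)
    then show False using gC by simp
  qed
  have "(INF m\<in>C. enat m) \<in> enat ` C"
    using Cne unfolding Inf_enat_def by (auto intro: LeastI_ex)
  then obtain m5 where m5: "m5 \<in> C" "enat m5 = 5" using gC by auto
  have "m5 = 5" using m5(2) by (simp add: numeral_eq_enat)
  then have cyc: "has_cycle n E 5" using m5(1) unfolding C_def by simp
  have no3: "\<not> has_cycle n E 3" using low[of 3] unfolding C_def by auto
  have no4: "\<not> has_cycle n E 4" using low[of 4] unfolding C_def by auto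
  have notri: "\<And>x y z. E x y \<Longrightarrow> E y z \<Longrightarrow> \<not> E x z"
  proof
    fix x y z assume xy: "E x y" and yz: "E y z" and xz: "E x z"
    define v where "v = (\<lambda>i::nat. if i = 0 then x else if i = 1 then y else z)"
    have ne: "x \<noteq> y" "y \<noteq> z" "x \<noteq> z" using xy yz xz Ei by metis+
    have "has_cycle n E 3" unfolding has_cycle_def
    proof (intro conjI exI[of _ v])
      show "inj_on v {..<3}" unfolding inj_on_def v_def using ne by (auto dest!: lt3)
      show "v ` {..<3} \<subseteq> {1..n}" unfolding v_def using Eb xy yz by (auto dest!: lt3)
      show "\<forall>i<3. E (v i) (v (Suc i mod 3))" unfolding v_def using xy yz Es[OF xz] by (auto dest!: lt3)
    qed simp
    then show False using no3 by simp
  qed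
  have uniq: "\<And>x z m m'. x \<noteq> z \<Longrightarrow> E x m \<Longrightarrow> E m z \<Longrightarrow> E x m' \<Longrightarrow> E m' z \<Longrightarrow> m = m'"
  proof (rule ccontr)
    fix x z m m' assume xz: "x \<noteq> z" and e: "E x m" "E m z" "E x m'" "E m' z" and mm: "m \<noteq> m'"
    define v where "v = (\<lambda>i::nat. if i = 0 then x else if i = 1 then m else if i = 2 then z else m')"
    have ne: "x \<noteq> m" "m \<noteq> z" "x \<noteq> m'" "m' \<noteq> z" using e Ei by metis+
    have "has_cycle n E 4" unfolding has_cycle_def
    proof (intro conjI exI[of _ v])
      show "inj_on v {..<4}" unfolding inj_on_def v_def using ne xz mm by (auto dest!: lt4)
      show "v ` {..<4} \<subseteq> {1..n}" unfolding v_def using Eb e by (auto dest!: lt4)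
      show "\<forall>i<4. E (v i) (v (Suc i mod 4))" unfolding v_def using e Es[OF e(3)] Es[OF e(4)] by (auto dest!: lt4)
    qed simp
    then show False using no4 by simp
  qed
  obtain v where v: "inj_on v {..<5}" "v ` {..<5} \<subseteq> {1..n}" "\<forall>i<5. E (v i) (v (Suc i mod 5))"
    using cyc unfolding has_cycle_def by blast
  have e01: "E (v 0) (v 1)" using v(3)[rule_format, of 0] by simp
  have e12: "E (v 1) (v 2)" using v(3)[rule_format, of 1] by (simp add: numeral_2_eq_2)
  have v02: "v 0 \<noteq> v 2" using v(1) unfolding inj_on_def by fastforce
  have V1: "v 1 \<in> {1..n}" using Eb e12 by blast
  have V0: "v 0 \<in> {1..n}" and V2: "v 2 \<in> {1..n}" using Eb e01 e12 by blast+
  have fin: "finite (neighbours n E x)" for x unfolding neighbours_def by simp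
  have "{v 0, v 2} \<subseteq> neighbours n E (v 1)" unfolding neighbours_def using V0 V2 Es[OF e01] e12 by auto
  then have "card {v 0, v 2} \<le> card (neighbours n E (v 1))" using fin by (rule card_mono[rotated])
  then have k2: "2 \<le> kk" using degk[OF V1] v02 by simp
  have deg: "\<And>x. x \<in> {1..n} \<Longrightarrow> \<exists>m1 m2. m1 \<noteq> m2 \<and> E x m1 \<and> E x m2"
  proof -
    fix x assume x: "x \<in> {1..n}"
    have "2 \<le> card (neighbours n E x)" using degk[OF x] k2 by simp
    then obtain m1 m2 where "m1 \<in> neighbours n E x" "m2 \<in> neighbours n E x" "m1 \<noteq> m2"
      by (metis One_nat_def Suc_1 card_le_Suc_iff numeral_le_iff one_le_numeral semiring_norm(69) insertCI)
    then show "\<exists>m1 m2. m1 \<noteq> m2 \<and> E x m1 \<and> E x m2" unfolding neighbours_def by blast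
  qed
  have n02: "\<not> E (v 0) (v 2)" using notri[OF e01 e12] .
  have "v 1 \<in> neighbours n E (v 0) \<inter> neighbours n E (v 2)"
    unfolding neighbours_def using V1 e01 Es[OF e12] by auto
  then have "card (neighbours n E (v 0) \<inter> neighbours n E (v 2)) \<noteq> 0" using fin by auto
  then have mu1: "mu \<noteq> 0" using mucard[OF V0 V2 v02 n02] by simp
  have exc: "\<And>x z. x \<in> {1..n} \<Longrightarrow> z \<in> {1..n} \<Longrightarrow> x \<noteq> z \<Longrightarrow> \<not> E x z \<Longrightarrow> \<exists>m. E x m \<and> E m z"
  proof -
    fix x z assume a: "x \<in> {1..n}" "z \<in> {1..n}" "x \<noteq> z" "\<not> E x z"
    have "card (neighbours n E x \<inter> neighbours n E z) \<noteq> 0" using mucard[OF a] mu1 by simp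
    then have "neighbours n E x \<inter> neighbours n E z \<noteq> {}" by (metis card.empty)
    then obtain m where "m \<in> neighbours n E x \<inter> neighbours n E z" by blast
    then show "\<exists>m. E x m \<and> E m z" unfolding neighbours_def using Es by blast
  qed
  interpret qgraph smul star nrm n E u
    using assms(3,4) Eb Es Ei notri uniq exc deg unfolding qgraph_def qgraph_axioms_def by blast
  show ?thesis using main by blast
qed

end
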